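(* Let $[\mu]\in\mathbb PV_n$ be a critical point of $F_n$ and $[\lambda]\in\mathbb PV_m$ a critical point of $F_m$. Then there exists $t\in\mathbb C$ such that $[\mu\oplus t\lambda]$ is a critical point of $F_{n+m}$, where $\mu\oplus t\lambda$ is the algebra on $\mathbb C^{n+m}=\mathbb C^n\oplus\mathbb C^m$ (orthogonal sum) given by $(\mu\oplus t\lambda)(X_1+Y_1,X_2+Y_2)=\mu(X_1,X_2)+t\lambda(Y_1,Y_2)$ for $X_i\in\mathbb C^n$, $Y_i\in\mathbb C^m$.
   Context: $V_k$ denotes the space of bilinear maps $\mathbb C^k\times\mathbb C^k\to\mathbb C^k$ with the standard Hermitian inner products; $F_k:\mathbb PV_k\to\mathbb R$ is $F_k([\mu])=\operatorname{tr}\mathrm M_\mu^2/\|\mu\|^4$, where $\|\mu\|^2=\sum_{i,j}\|\mu(X_i,X_j)\|^2$ for an orthonormal basis $\{X_i\}$, and $\mathrm M_\mu=2\sum_i L^\mu_{X_i}(L^\mu_{X_i})^*-2\sum_i (L^\mu_{X_i})^*L^\mu_{X_i}-2\sum_i (R^\mu_{X_i})^*R^\mu_{X_i}$ with $L^\mu_XY=\mu(X,Y)$, $R^\mu_XY=\mu(Y,X)$. It is known that $[\mu]$ is a critical point of $F_k$ iff $\mathrm M_\mu=c_\mu I+D_\mu$ for some $c_\mu\in\mathbb R$ and some derivation $D_\mu$ of $\mu$. *)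

theory Defs
  imports Complex_Main
begin

text \<open>A vector of C^k is represented by its coordinates w.r.t. the standard
orthonormal basis e_0,...,e_{k-1}. A bilinear map mu : C^k x C^k -> C^k is represented by its
structure constants: mu(e_i,e_j) = sum_l (a i j l) e_l, where a i j l = 0 unless i,j,l < k.
Matrices of size k x k are functions nat => nat => complex, entry (row, column),
only entries with indices < k being relevant.\<close>

type_synonym alg = "nat \<Rightarrow> nat \<Rightarrow> nat \<Rightarrow> complex"
type_synonym cmat = "nat \<Rightarrow> nat \<Rightarrow> complex"

definition in_V :: "nat \<Rightarrow> alg \<Rightarrow> bool" where
  "in_V k a \<longleftrightarrow> (\<forall>i j l. \<not> (i < k \<and> j < k \<and> l < k) \<longrightarrow> a i j l = 0)"

definition alg_norm_sq :: "nat \<Rightarrow> alg \<Rightarrow> real" where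
  "alg_norm_sq k a = (\<Sum>i<k. \<Sum>j<k. \<Sum>l<k. (cmod (a i j l))\<^sup>2)"

definition alg_add :: "alg \<Rightarrow> alg \<Rightarrow> alg" where
  "alg_add a b = (\<lambda>i j l. a i j l + b i j l)"

definition alg_scale :: "complex \<Rightarrow> alg \<Rightarrow> alg" where
  "alg_scale c a = (\<lambda>i j l. c * a i j l)"

text \<open>Left multiplication L_{e_i}: column j is mu(e_i,e_j), so entry (l,j) is a i j l.\<close>
definition Lmat :: "alg \<Rightarrow> nat \<Rightarrow> cmat" where
  "Lmat a i = (\<lambda>l j. a i j l)"

text \<open>Right multiplication R_{e_i}: column j is mu(e_j,e_i), so entry (l,j) is a j i l.\<close>
definition Rmat :: "alg \<Rightarrow> nat \<Rightarrow> cmat" where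
  "Rmat a i = (\<lambda>l j. a j i l)"

definition mat_mult :: "nat \<Rightarrow> cmat \<Rightarrow> cmat \<Rightarrow> cmat" where
  "mat_mult k A B = (\<lambda>r c. \<Sum>s<k. A r s * B s c)"

definition mat_adj :: "cmat \<Rightarrow> cmat" where
  "mat_adj A = (\<lambda>r c. cnj (A c r))"

definition mat_trace :: "nat \<Rightarrow> cmat \<Rightarrow> complex" where
  "mat_trace k A = (\<Sum>r<k. A r r)"

definition Mmat :: "nat \<Rightarrow> alg \<Rightarrow> cmat" where
  "Mmat k a = (\<lambda>r c.
      2 * (\<Sum>i<k. mat_mult k (Lmat a i) (mat_adj (Lmat a i)) r c)
    - 2 * (\<Sum>i<k. mat_mult k (mat_adj (Lmat a i)) (Lmat a i) r c)
    - 2 * (\<Sum>i<k. mat_mult k (mat_adj (Rmat a i)) (Rmat a i) r c))"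

text \<open>F_k(mu) = tr(M_mu^2) / ||mu||^4 (tr M_mu^2 is real since M_mu is Hermitian).\<close>
definition Ffun :: "nat \<Rightarrow> alg \<Rightarrow> real" where
  "Ffun k a = Re (mat_trace k (mat_mult k (Mmat k a) (Mmat k a))) / (alg_norm_sq k a)\<^sup>2"

text \<open>[mu] is a critical point of F_k on PV_k: mu is a nonzero element of V_k and the
(scale-invariant) function F_k on V_k - {0} has vanishing differential at mu, i.e. all real
directional derivatives in directions of V_k (as a real vector space) vanish.\<close>
definition critical :: "nat \<Rightarrow> alg \<Rightarrow> bool" where
  "critical k a \<longleftrightarrow> in_V k a \<and> alg_norm_sq k a \<noteq> 0 \<and>
     (\<forall>b. in_V k b \<longrightarrow>
        ((\<lambda>s::real. Ffun k (alg_add a (alg_scale (complex_of_real s) b))) has_real_derivative 0) (at 0))"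

text \<open>The direct sum mu \<oplus> t lambda on C^(n+m) = C^n \<oplus> C^m, the C^m factor occupying
the coordinates n,...,n+m-1.\<close>
definition alg_dsum :: "nat \<Rightarrow> alg \<Rightarrow> complex \<Rightarrow> nat \<Rightarrow> alg \<Rightarrow> alg" where
  "alg_dsum n a t m b = (\<lambda>i j l.
     if i < n \<and> j < n \<and> l < n then a i j l
     else if n \<le> i \<and> i < n + m \<and> n \<le> j \<and> j < n + m \<and> n \<le> l \<and> l < n + m
       then t * b (i - n) (j - n) (l - n)
     else 0)"

end

theory Submission imports Defs begin

definition Q :: "nat set \<Rightarrow> alg \<Rightarrow> alg \<Rightarrow> cmat" where
 "Q I a b = (\<lambda>r c. 2 * (\<Sum>i\<in>I. \<Sum>s\<in>I. a i s r * cnj (b i s c))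
    - 2 * (\<Sum>i\<in>I. \<Sum>s\<in>I. cnj (b i r s) * a i c s)
    - 2 * (\<Sum>i\<in>I. \<Sum>s\<in>I. cnj (b r i s) * a c i s))"

definition Tr :: "nat set \<Rightarrow> cmat \<Rightarrow> cmat \<Rightarrow> complex" where
 "Tr I X Y = (\<Sum>r\<in>I. \<Sum>c\<in>I. X r c * Y c r)"

definition N1 :: "nat \<Rightarrow> alg \<Rightarrow> alg \<Rightarrow> real" where
 "N1 k a b = (\<Sum>i<k. \<Sum>j<k. \<Sum>l<k. 2 * Re (a i j l * cnj (b i j l)))"

lemma Mmat_Q: "Mmat k a = Q {..<k} a a"
  by (simp add: Mmat_def Q_def mat_mult_def Lmat_def Rmat_def mat_adj_def)

lemma Q_add1: "Q I (alg_add x y) z r c = Q I x z r c + Q I y z r c"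
  by (simp add: Q_def alg_add_def algebra_simps sum.distrib)

lemma Q_add2: "Q I x (alg_add y z) r c = Q I x y r c + Q I x z r c"
  by (simp add: Q_def alg_add_def algebra_simps sum.distrib)

lemma Q_scale1: "Q I (alg_scale d x) y r c = d * Q I x y r c"
  by (simp add: Q_def alg_scale_def algebra_simps sum_distrib_left)

lemma Q_scale2: "Q I x (alg_scale d y) r c = cnj d * Q I x y r c"
  by (simp add: Q_def alg_scale_def algebra_simps sum_distrib_left)

lemma Tr_poly:
  fixes z :: complex
  shows "Tr I (\<lambda>r c. X0 r c + z * X1 r c + z^2 * X2 r c) (\<lambda>r c. X0 r c + z * X1 r c + z^2 * X2 r c)
   = Tr I X0 X0 + z * (Tr I X0 X1 + Tr I X1 X0) + z^2 * (Tr I X0 X2 + Tr I X1 X1 + Tr I X2 X0)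
     + z^3 * (Tr I X1 X2 + Tr I X2 X1) + z^4 * Tr I X2 X2"
proof -
  have e: "\<And>r c. (X0 r c + z * X1 r c + z^2 * X2 r c) * (X0 c r + z * X1 c r + z^2 * X2 c r)
     = X0 r c * X0 c r + z * (X0 r c * X1 c r + X1 r c * X0 c r) + z^2 * (X0 r c * X2 c r + X1 r c * X1 c r + X2 r c * X0 c r)
      + z^3 * (X1 r c * X2 c r + X2 r c * X1 c r) + z^4 * (X2 r c * X2 c r)"
    by (simp add: algebra_simps power2_eq_square power3_eq_cube power4_eq_xxxx)
  show ?thesis unfolding Tr_def e by (simp add: sum.distrib sum_distrib_left algebra_simps)
qed

lemma cmod_lin: "(cmod (x + complex_of_real s * y))^2 = (cmod x)^2 + s * (2 * Re (x * cnj y)) + s^2 * (cmod y)^2"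
  by (simp add: cmod_power2 power2_sum power_mult_distrib algebra_simps)

lemma norm_poly: "alg_norm_sq k (alg_add a (alg_scale (complex_of_real s) b))
   = alg_norm_sq k a + s * N1 k a b + s^2 * alg_norm_sq k b"
  unfolding alg_norm_sq_def N1_def alg_add_def alg_scale_def cmod_lin
  by (simp only: sum.distrib sum_distrib_left)

definition C0 :: "nat \<Rightarrow> alg \<Rightarrow> complex" where
  "C0 k a = Tr {..<k} (Q {..<k} a a) (Q {..<k} a a)"

definition M1 :: "nat set \<Rightarrow> alg \<Rightarrow> alg \<Rightarrow> cmat" where
  "M1 I a b = (\<lambda>r c. Q I a b r c + Q I b a r c)"

definition C1 :: "nat \<Rightarrow> alg \<Rightarrow> alg \<Rightarrow> complex" where
  "C1 k a b = Tr {..<k} (Q {..<k} a a) (M1 {..<k} a b) + Tr {..<k} (M1 {..<k} a b) (Q {..<k} a a)"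

lemma Q_lin: "Q I (alg_add a (alg_scale (complex_of_real s) b)) (alg_add a (alg_scale (complex_of_real s) b)) =
   (\<lambda>r c. Q I a a r c + complex_of_real s * M1 I a b r c + (complex_of_real s)^2 * Q I b b r c)"
  by (rule ext)+ (simp add: Q_add1 Q_add2 Q_scale1 Q_scale2 M1_def algebra_simps power2_eq_square)

lemma Ffun_poly: "Ffun k (alg_add a (alg_scale (complex_of_real s) b)) =
  (Re (C0 k a) + s * Re (C1 k a b) + s^2 * Re (Tr {..<k} (Q {..<k} a a) (Q {..<k} b b) + Tr {..<k} (M1 {..<k} a b) (M1 {..<k} a b) + Tr {..<k} (Q {..<k} b b) (Q {..<k} a a))
   + s^3 * Re (Tr {..<k} (M1 {..<k} a b) (Q {..<k} b b) + Tr {..<k} (Q {..<k} b b) (M1 {..<k} a b))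
   + s^4 * Re (Tr {..<k} (Q {..<k} b b) (Q {..<k} b b)))
  / (alg_norm_sq k a + s * N1 k a b + s^2 * alg_norm_sq k b)^2"
proof -
  have t: "mat_trace k (mat_mult k X X) = Tr {..<k} X X" for X
    by (simp add: mat_trace_def mat_mult_def Tr_def)
  show ?thesis
    unfolding Ffun_def Mmat_Q t Q_lin Tr_poly norm_poly C0_def C1_def
    by (simp flip: of_real_power)
qed

definition Dv :: "nat \<Rightarrow> alg \<Rightarrow> alg \<Rightarrow> real" where
  "Dv k a b = (Re (C1 k a b) * alg_norm_sq k a - 2 * Re (C0 k a) * N1 k a b) / (alg_norm_sq k a)^3"

lemma F_deriv:
  assumes "alg_norm_sq k a \<noteq> 0"
  shows "((\<lambda>s. Ffun k (alg_add a (alg_scale (complex_of_real s) b))) has_real_derivative Dv k a b) (at 0)"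
  unfolding Ffun_poly
  apply (rule derivative_eq_intros refl | simp add: assms)+
  using assms by (simp add: Dv_def field_simps eval_nat_numeral)

lemma crit_iff:
  assumes "in_V k a" "alg_norm_sq k a \<noteq> 0"
  shows "critical k a \<longleftrightarrow> (\<forall>b. in_V k b \<longrightarrow> Re (C1 k a b) * alg_norm_sq k a = 2 * Re (C0 k a) * N1 k a b)"
proof -
  have "Dv k a b = 0 \<longleftrightarrow> Re (C1 k a b) * alg_norm_sq k a = 2 * Re (C0 k a) * N1 k a b" for b
    using assms(2) by (simp add: Dv_def)
  moreover have "((\<lambda>s. Ffun k (alg_add a (alg_scale (complex_of_real s) b))) has_real_derivative 0) (at 0)
      \<longleftrightarrow> Dv k a b = 0" for b
    using F_deriv[OF assms(2), of b] DERIV_unique by metis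
  ultimately show ?thesis using assms unfolding critical_def by simp
qed

lemma norm_nonneg: "alg_norm_sq k a \<ge> 0"
  unfolding alg_norm_sq_def by (intro sum_nonneg) auto

lemma Q_herm: "Q I a a c r = cnj (Q I a a r c)"
  by (simp add: Q_def cnj_sum mult.commute)

lemma swap2: "(\<Sum>r\<in>I. \<Sum>i\<in>J. h i r) = (\<Sum>i\<in>J. \<Sum>r\<in>I. (h i r :: complex))"
  by (rule sum.swap)

lemma swap3: "(\<Sum>r\<in>I. \<Sum>i\<in>I. \<Sum>s\<in>I. g i s r) = (\<Sum>i\<in>I. \<Sum>s\<in>I. \<Sum>r\<in>I. (g i s r :: complex))"
proof -
  have "(\<Sum>r\<in>I. \<Sum>i\<in>I. \<Sum>s\<in>I. g i s r) = (\<Sum>i\<in>I. \<Sum>r\<in>I. \<Sum>s\<in>I. g i s r)"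
    by (rule sum.swap)
  also have "\<dots> = (\<Sum>i\<in>I. \<Sum>s\<in>I. \<Sum>r\<in>I. g i s r)"
  proof (rule sum.cong[OF refl])
    fix i show "(\<Sum>r\<in>I. \<Sum>s\<in>I. g i s r) = (\<Sum>s\<in>I. \<Sum>r\<in>I. g i s r)"
      by (rule sum.swap)
  qed
  finally show ?thesis .
qed

lemma trace_Q: "(\<Sum>r<k. Q {..<k} a a r r) = - 2 * complex_of_real (alg_norm_sq k a)"
proof -
  have sq: "x * cnj x = complex_of_real ((cmod x)^2)" "cnj x * x = complex_of_real ((cmod x)^2)" for x
    by (simp_all add: complex_norm_square mult.commute del: of_real_power)
  define N where "N = (\<Sum>i<k. \<Sum>j<k. \<Sum>l<k. complex_of_real ((cmod (a i j l))^2))"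
  have N: "N = complex_of_real (alg_norm_sq k a)" unfolding N_def alg_norm_sq_def by simp
  have 1: "(\<Sum>r<k. \<Sum>i<k. \<Sum>s<k. a i s r * cnj (a i s r)) = N"
    unfolding N_def sq by (rule swap3)
  have 2: "(\<Sum>r<k. \<Sum>i<k. \<Sum>s<k. cnj (a i r s) * a i r s) = N"
    unfolding N_def sq by (rule swap2)
  have 3: "(\<Sum>r<k. \<Sum>i<k. \<Sum>s<k. cnj (a r i s) * a r i s) = N"
    unfolding N_def sq by simp
  show ?thesis unfolding Q_def using 1 2 3 N
    by (simp add: sum.distrib sum_subtractf flip: sum_distrib_left)
qed

lemma C0_pos:
  assumes "alg_norm_sq k a \<noteq> 0"
  shows "Re (C0 k a) > 0"
proof -
  let ?X = "Q {..<k} a a"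
  have e: "Re (C0 k a) = (\<Sum>r<k. \<Sum>c<k. (cmod (?X r c))^2)"
  proof -
    have "?X r c * ?X c r = complex_of_real ((cmod (?X r c))^2)" for r c
      unfolding Q_herm[of _ a c r] by (simp add: complex_norm_square del: of_real_power)
    then show ?thesis unfolding C0_def Tr_def by simp
  qed
  have ge: "(\<Sum>r<k. (cmod (?X r r))^2) \<le> Re (C0 k a)"
    unfolding e
    by (intro sum_mono member_le_sum) auto
  have "\<exists>r<k. ?X r r \<noteq> 0"
  proof (rule ccontr)
    assume "\<not> ?thesis"
    hence "(\<Sum>r<k. ?X r r) = 0" by simp
    with trace_Q[of k a] assms show False by simp
  qed
  then obtain r where r: "r < k" "?X r r \<noteq> 0" by blast
  have "(cmod (?X r r))^2 \<le> (\<Sum>r<k. (cmod (?X r r))^2)"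
    by (rule member_le_sum) (use r in auto)
  moreover have "(cmod (?X r r))^2 > 0" using r by simp
  ultimately show ?thesis using ge by linarith
qed

definition blk :: "nat set \<Rightarrow> alg \<Rightarrow> bool" where
  "blk A a \<longleftrightarrow> (\<forall>i j l. a i j l \<noteq> 0 \<longrightarrow> (i \<in> A \<longleftrightarrow> j \<in> A) \<and> (j \<in> A \<longleftrightarrow> l \<in> A))"

lemma dsum_restrict:
  fixes g :: "nat \<Rightarrow> nat \<Rightarrow> 'b::comm_monoid_add"
  assumes "finite U" "S \<subseteq> U" "\<And>i s. i \<in> U \<Longrightarrow> s \<in> U \<Longrightarrow> \<not> (i \<in> S \<and> s \<in> S) \<Longrightarrow> g i s = 0"
  shows "(\<Sum>i\<in>U. \<Sum>s\<in>U. g i s) = (\<Sum>i\<in>S. \<Sum>s\<in>S. g i s)"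
proof -
  have "(\<Sum>i\<in>U. \<Sum>s\<in>U. g i s) = (\<Sum>i\<in>U. \<Sum>s\<in>S. g i s)"
    using assms by (intro sum.cong refl sum.mono_neutral_right) auto
  also have "\<dots> = (\<Sum>i\<in>S. \<Sum>s\<in>S. g i s)"
    using assms by (intro sum.mono_neutral_right) (auto intro!: sum.neutral)
  finally show ?thesis .
qed

lemma Q_restrict:
  assumes "finite U" "S \<subseteq> U"
    and "\<And>i s x. i \<in> U \<Longrightarrow> s \<in> U \<Longrightarrow> \<not> (i \<in> S \<and> s \<in> S) \<Longrightarrow> x = r \<or> x = c \<Longrightarrow>
            a i s x = 0 \<and> a i x s = 0 \<and> a x i s = 0"
  shows "Q U a b r c = Q S a b r c" "Q U b a r c = Q S b a r c"
proof -
  have h: "\<And>g. (\<And>i s. i \<in> U \<Longrightarrow> s \<in> U \<Longrightarrow> \<not> (i \<in> S \<and> s \<in> S) \<Longrightarrow> g i s = 0) \<Longrightarrow>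
     (\<Sum>i\<in>U. \<Sum>s\<in>U. g i s) = (\<Sum>i\<in>S. \<Sum>s\<in>S. (g i s :: complex))"
    using dsum_restrict[OF assms(1,2)] by blast
  have z: "\<And>i s x. i \<in> U \<Longrightarrow> s \<in> U \<Longrightarrow> \<not> (i \<in> S \<and> s \<in> S) \<Longrightarrow> x = r \<or> x = c \<Longrightarrow>
            a i s x = 0 \<and> a i x s = 0 \<and> a x i s = 0" by (rule assms(3))
  have e1: "(\<Sum>i\<in>U. \<Sum>s\<in>U. a i s r * cnj (b i s c)) = (\<Sum>i\<in>S. \<Sum>s\<in>S. a i s r * cnj (b i s c))"
    by (rule h) (use z in force)
  have e2: "(\<Sum>i\<in>U. \<Sum>s\<in>U. cnj (b i r s) * a i c s) = (\<Sum>i\<in>S. \<Sum>s\<in>S. cnj (b i r s) * a i c s)"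
    by (rule h) (use z in force)
  have e3: "(\<Sum>i\<in>U. \<Sum>s\<in>U. cnj (b r i s) * a c i s) = (\<Sum>i\<in>S. \<Sum>s\<in>S. cnj (b r i s) * a c i s)"
    by (rule h) (use z in force)
  have f1: "(\<Sum>i\<in>U. \<Sum>s\<in>U. b i s r * cnj (a i s c)) = (\<Sum>i\<in>S. \<Sum>s\<in>S. b i s r * cnj (a i s c))"
    by (rule h) (use z in force)
  have f2: "(\<Sum>i\<in>U. \<Sum>s\<in>U. cnj (a i r s) * b i c s) = (\<Sum>i\<in>S. \<Sum>s\<in>S. cnj (a i r s) * b i c s)"
    by (rule h) (use z in force)
  have f3: "(\<Sum>i\<in>U. \<Sum>s\<in>U. cnj (a r i s) * b c i s) = (\<Sum>i\<in>S. \<Sum>s\<in>S. cnj (a r i s) * b c i s)"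
    by (rule h) (use z in force)
  show "Q U a b r c = Q S a b r c" unfolding Q_def using e1 e2 e3 by simp
  show "Q U b a r c = Q S b a r c" unfolding Q_def using f1 f2 f3 by simp
qed

lemma Q_restrictA:
  assumes "finite U" "blk A a" "r \<in> A" "c \<in> A"
  shows "Q U a b r c = Q (U \<inter> A) a b r c" "Q U b a r c = Q (U \<inter> A) b a r c"
  using assms unfolding blk_def by (intro Q_restrict; blast)+

lemma Q_restrictB:
  assumes "finite U" "blk A a" "r \<notin> A" "c \<notin> A"
  shows "Q U a b r c = Q (U - A) a b r c" "Q U b a r c = Q (U - A) b a r c"
  using assms unfolding blk_def by (intro Q_restrict; blast)+

lemma Q_cong:
  assumes "r \<in> S" "c \<in> S" "\<And>i j l. i \<in> S \<Longrightarrow> j \<in> S \<Longrightarrow> l \<in> S \<Longrightarrow> a i j l = a' i j l \<and> b i j l = b' i j l"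
  shows "Q S a b r c = Q S a' b' r c"
  unfolding Q_def using assms by (intro arg_cong2[where f="(-)"] arg_cong2[where f="(*)"] refl sum.cong; simp)+

lemma Q_cross0:
  assumes "blk A a" "blk A b" "(r \<in> A) \<noteq> (c \<in> A)"
  shows "Q U a b r c = 0"
proof -
  have e1: "(\<Sum>i\<in>U. \<Sum>s\<in>U. a i s r * cnj (b i s c)) = 0"
    by (intro sum.neutral ballI) (use assms in \<open>simp add: blk_def; metis\<close>)
  have e2: "(\<Sum>i\<in>U. \<Sum>s\<in>U. cnj (b i r s) * a i c s) = 0"
    by (intro sum.neutral ballI) (use assms in \<open>simp add: blk_def; metis\<close>)
  have e3: "(\<Sum>i\<in>U. \<Sum>s\<in>U. cnj (b r i s) * a c i s) = 0"
    by (intro sum.neutral ballI) (use assms in \<open>simp add: blk_def; metis\<close>)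
  show ?thesis unfolding Q_def using e1 e2 e3 by simp
qed

lemma Tr_sym: "Tr I X Y = Tr I Y X"
  unfolding Tr_def by (subst sum.swap) (simp add: mult.commute)

lemma Tr_split:
  assumes "finite U" "\<And>r c. X r c \<noteq> 0 \<Longrightarrow> (r \<in> A \<longleftrightarrow> c \<in> A)"
  shows "Tr U X Y = Tr (U \<inter> A) X Y + Tr (U - A) X Y"
proof -
  have "Tr U X Y = (\<Sum>r\<in>U \<inter> A. \<Sum>c\<in>U. X r c * Y c r) + (\<Sum>r\<in>U - A. \<Sum>c\<in>U. X r c * Y c r)"
    unfolding Tr_def using assms(1) by (rule sum.Int_Diff)
  also have "(\<Sum>r\<in>U \<inter> A. \<Sum>c\<in>U. X r c * Y c r) = Tr (U \<inter> A) X Y"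
    unfolding Tr_def using assms by (intro sum.cong refl sum.mono_neutral_right) auto
  also have "(\<Sum>r\<in>U - A. \<Sum>c\<in>U. X r c * Y c r) = Tr (U - A) X Y"
    unfolding Tr_def using assms by (intro sum.cong refl sum.mono_neutral_right) auto
  finally show ?thesis .
qed

lemma Tr_cong:
  assumes "\<And>r c. r \<in> S \<Longrightarrow> c \<in> S \<Longrightarrow> X r c = X' r c \<and> Y r c = Y' r c"
  shows "Tr S X Y = Tr S X' Y'"
  unfolding Tr_def using assms by (intro sum.cong refl) auto

lemma Tr_reindex: "Tr ((\<lambda>x. x + n) ` I) X Y = Tr I (\<lambda>r c. X (r + n) (c + n)) (\<lambda>r c. Y (r + n) (c + n))"
  unfolding Tr_def by (simp add: sum.reindex inj_on_def)

lemma Tr_scale: "Tr I (\<lambda>r c. d * X r c) (\<lambda>r c. e * Y r c) = d * e * Tr I X Y"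
  unfolding Tr_def by (simp add: sum_distrib_left algebra_simps)

definition sh :: "nat \<Rightarrow> alg \<Rightarrow> alg" where
  "sh n x = (\<lambda>i j l. if n \<le> i \<and> n \<le> j \<and> n \<le> l then x (i - n) (j - n) (l - n) else 0)"

lemma Q_sh: "Q ((\<lambda>x. x + n) ` I) (sh n a) (sh n b) (r + n) (c + n) = Q I a b r c"
  unfolding Q_def by (simp add: sum.reindex inj_on_def sh_def)

definition S3 :: "nat set \<Rightarrow> (nat \<Rightarrow> nat \<Rightarrow> nat \<Rightarrow> real) \<Rightarrow> real" where
  "S3 I f = (\<Sum>i\<in>I. \<Sum>j\<in>I. \<Sum>l\<in>I. f i j l)"

lemma S3_split:
  assumes "finite U" "\<And>i j l. f i j l \<noteq> 0 \<Longrightarrow> (i \<in> A \<longleftrightarrow> j \<in> A) \<and> (j \<in> A \<longleftrightarrow> l \<in> A)"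
  shows "S3 U f = S3 (U \<inter> A) f + S3 (U - A) f"
proof -
  have "S3 U f = (\<Sum>i\<in>U \<inter> A. \<Sum>j\<in>U. \<Sum>l\<in>U. f i j l) + (\<Sum>i\<in>U - A. \<Sum>j\<in>U. \<Sum>l\<in>U. f i j l)"
    unfolding S3_def using assms(1) by (rule sum.Int_Diff)
  also have "(\<Sum>i\<in>U \<inter> A. \<Sum>j\<in>U. \<Sum>l\<in>U. f i j l) = S3 (U \<inter> A) f"
    unfolding S3_def using assms by (intro sum.cong refl dsum_restrict) auto
  also have "(\<Sum>i\<in>U - A. \<Sum>j\<in>U. \<Sum>l\<in>U. f i j l) = S3 (U - A) f"
    unfolding S3_def using assms by (intro sum.cong refl dsum_restrict) auto
  finally show ?thesis .
qed

lemma S3_reindex: "S3 ((\<lambda>x. x + n) ` I) f = S3 I (\<lambda>i j l. f (i + n) (j + n) (l + n))"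
  unfolding S3_def by (simp add: sum.reindex inj_on_def)

definition rA :: "nat \<Rightarrow> alg \<Rightarrow> alg" where
  "rA n x = (\<lambda>i j l. if i < n \<and> j < n \<and> l < n then x i j l else 0)"

definition rB :: "nat \<Rightarrow> nat \<Rightarrow> alg \<Rightarrow> alg" where
  "rB n m x = (\<lambda>i j l. if i < m \<and> j < m \<and> l < m then x (i + n) (j + n) (l + n) else 0)"

lemma in_V_rA: "in_V n (rA n x)" by (simp add: in_V_def rA_def)
lemma in_V_rB: "in_V m (rB n m x)" by (simp add: in_V_def rB_def)

lemma Uint: "{..<n + m} \<inter> {..<n} = {..<(n::nat)}" by auto
lemma Udiff: "{..<n + m} - {..<n} = (\<lambda>x. x + n) ` {..<(m::nat)}"
proof
  show "{..<n + m} - {..<n} \<subseteq> (\<lambda>x. x + n) ` {..<m}"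
  proof
    fix x assume "x \<in> {..<n + m} - {..<n}"
    then have "x - n < m" "x = (x - n) + n" by auto
    then show "x \<in> (\<lambda>x. x + n) ` {..<m}" by blast
  qed
qed auto

context
  fixes n m :: nat and mu lam :: alg and t :: real
  assumes Vmu: "in_V n mu" and Vlam: "in_V m lam"
begin

abbreviation "nu \<equiv> alg_dsum n mu (complex_of_real t) m lam"

lemma blk_nu: "blk {..<n} nu"
  unfolding blk_def alg_dsum_def by auto

lemma in_V_nu: "in_V (n + m) nu"
  unfolding in_V_def alg_dsum_def by auto

lemma rA_nu: "rA n nu = mu"
  using Vmu unfolding rA_def alg_dsum_def in_V_def by (intro ext) auto

lemma rB_nu: "rB n m nu = alg_scale (complex_of_real t) lam"
  using Vlam unfolding rB_def alg_dsum_def in_V_def alg_scale_def by (intro ext) auto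

lemma E1:
  assumes "r < n" "c < n"
  shows "Q {..<n + m} nu x r c = Q {..<n} mu (rA n x) r c"
    and "Q {..<n + m} x nu r c = Q {..<n} (rA n x) mu r c"
proof -
  have cg: "\<And>i j l. i \<in> {..<n} \<Longrightarrow> j \<in> {..<n} \<Longrightarrow> l \<in> {..<n} \<Longrightarrow> nu i j l = mu i j l \<and> x i j l = rA n x i j l"
    by (simp add: alg_dsum_def rA_def)
  show "Q {..<n + m} nu x r c = Q {..<n} mu (rA n x) r c"
    using Q_restrictA(1)[where U="{..<n+m}" and b=x and r=r and c=c, OF _ blk_nu] assms Q_cong[where r=r and S="{..<n}" and c=c and a=nu and a'=mu and b=x and b'="rA n x"] cg
    unfolding Uint by auto
  show "Q {..<n + m} x nu r c = Q {..<n} (rA n x) mu r c"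
    using Q_restrictA(2)[where U="{..<n+m}" and b=x and r=r and c=c, OF _ blk_nu] assms Q_cong[where r=r and S="{..<n}" and c=c and a=x and a'="rA n x" and b=nu and b'=mu] cg
    unfolding Uint by auto
qed

lemma E2:
  assumes "r < m" "c < m"
  shows "Q {..<n + m} nu x (r + n) (c + n) = complex_of_real t * Q {..<m} lam (rB n m x) r c"
    and "Q {..<n + m} x nu (r + n) (c + n) = complex_of_real t * Q {..<m} (rB n m x) lam r c"
proof -
  let ?I = "(\<lambda>x. x + n) ` {..<m}"
  have cg: "\<And>i j l. i \<in> ?I \<Longrightarrow> j \<in> ?I \<Longrightarrow> l \<in> ?I \<Longrightarrow>
      nu i j l = sh n (alg_scale (complex_of_real t) lam) i j l \<and> x i j l = sh n (rB n m x) i j l"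
    by (auto simp add: alg_dsum_def sh_def rB_def alg_scale_def)
  have rc: "r + n \<in> ?I" "c + n \<in> ?I" using assms by auto
  have "Q {..<n + m} nu x (r + n) (c + n) = Q ?I nu x (r + n) (c + n)"
    using Q_restrictB(1)[where U="{..<n+m}" and b=x and r="r+n" and c="c+n", OF _ blk_nu] unfolding Udiff by auto
  also have "\<dots> = Q ?I (sh n (alg_scale (complex_of_real t) lam)) (sh n (rB n m x)) (r + n) (c + n)"
    by (rule Q_cong[OF rc]) (use cg in blast)
  also have "\<dots> = complex_of_real t * Q {..<m} lam (rB n m x) r c"
    by (simp only: Q_sh Q_scale1)
  finally show "Q {..<n + m} nu x (r + n) (c + n) = complex_of_real t * Q {..<m} lam (rB n m x) r c" .
  have "Q {..<n + m} x nu (r + n) (c + n) = Q ?I x nu (r + n) (c + n)"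
    using Q_restrictB(2)[where U="{..<n+m}" and b=x and r="r+n" and c="c+n", OF _ blk_nu] unfolding Udiff by auto
  also have "\<dots> = Q ?I (sh n (rB n m x)) (sh n (alg_scale (complex_of_real t) lam)) (r + n) (c + n)"
    by (rule Q_cong[OF rc]) (use cg in blast)
  also have "\<dots> = complex_of_real t * Q {..<m} (rB n m x) lam r c"
    by (simp only: Q_sh Q_scale2) simp
  finally show "Q {..<n + m} x nu (r + n) (c + n) = complex_of_real t * Q {..<m} (rB n m x) lam r c" .
qed

lemma TrX_nu:
  "Tr {..<n + m} (Q {..<n + m} nu nu) Y = Tr {..<n} (Q {..<n + m} nu nu) Y
    + Tr {..<m} (\<lambda>r c. Q {..<n + m} nu nu (r + n) (c + n)) (\<lambda>r c. Y (r + n) (c + n))"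
proof -
  have "Tr {..<n + m} (Q {..<n + m} nu nu) Y = Tr ({..<n + m} \<inter> {..<n}) (Q {..<n + m} nu nu) Y
      + Tr ({..<n + m} - {..<n}) (Q {..<n + m} nu nu) Y"
    by (rule Tr_split) (use Q_cross0[OF blk_nu blk_nu] in blast)+
  then show ?thesis unfolding Uint Udiff Tr_reindex .
qed

lemma QQ_B: "r < m \<Longrightarrow> c < m \<Longrightarrow> Q {..<n + m} nu nu (r + n) (c + n) =
   (complex_of_real t * complex_of_real t) * Q {..<m} lam lam r c"
  using E2(1)[of r c nu] by (simp add: rB_nu Q_scale2)

lemma QQ_A: "r < n \<Longrightarrow> c < n \<Longrightarrow> Q {..<n + m} nu nu r c = Q {..<n} mu mu r c"
  using E1(1)[of r c nu] by (simp add: rA_nu)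

lemma C0_nu: "C0 (n + m) nu = C0 n mu + (complex_of_real t)^4 * C0 m lam"
proof -
  have a: "Tr {..<n} (Q {..<n + m} nu nu) (Q {..<n + m} nu nu) = C0 n mu"
    unfolding C0_def by (rule Tr_cong) (simp add: QQ_A)
  have "Tr {..<m} (\<lambda>r c. Q {..<n + m} nu nu (r + n) (c + n)) (\<lambda>r c. Q {..<n + m} nu nu (r + n) (c + n))
     = Tr {..<m} (\<lambda>r c. (complex_of_real t * complex_of_real t) * Q {..<m} lam lam r c)
                 (\<lambda>r c. (complex_of_real t * complex_of_real t) * Q {..<m} lam lam r c)"
    by (rule Tr_cong) (simp add: QQ_B)
  also have "\<dots> = (complex_of_real t)^4 * C0 m lam"
    unfolding Tr_scale C0_def by (simp add: power4_eq_xxxx)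
  finally show ?thesis unfolding C0_def[of "n+m"] TrX_nu using a unfolding C0_def by simp
qed

lemma C1_two: "C1 k a b = 2 * Tr {..<k} (Q {..<k} a a) (M1 {..<k} a b)"
  unfolding C1_def by (subst Tr_sym[of _ "M1 _ _ _"]) simp

lemma C1_nu: "C1 (n + m) nu b = C1 n mu (rA n b) + (complex_of_real t)^3 * C1 m lam (rB n m b)"
proof -
  have a: "Tr {..<n} (Q {..<n + m} nu nu) (M1 {..<n + m} nu b) = Tr {..<n} (Q {..<n} mu mu) (M1 {..<n} mu (rA n b))"
    by (rule Tr_cong) (simp add: QQ_A M1_def E1 rA_nu)
  have "Tr {..<m} (\<lambda>r c. Q {..<n + m} nu nu (r + n) (c + n)) (\<lambda>r c. M1 {..<n + m} nu b (r + n) (c + n))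
     = Tr {..<m} (\<lambda>r c. (complex_of_real t * complex_of_real t) * Q {..<m} lam lam r c)
                 (\<lambda>r c. complex_of_real t * M1 {..<m} lam (rB n m b) r c)"
    by (rule Tr_cong) (simp add: QQ_B M1_def E2 distrib_left rB_nu Q_scale1)
  also have "\<dots> = (complex_of_real t)^3 * Tr {..<m} (Q {..<m} lam lam) (M1 {..<m} lam (rB n m b))"
    unfolding Tr_scale by (simp add: power3_eq_cube)
  finally show ?thesis unfolding C1_two TrX_nu using a by (simp add: algebra_simps)
qed

lemma S3_nu:
  assumes "\<And>i j l. nu i j l = 0 \<Longrightarrow> f i j l = 0"
  shows "S3 {..<n + m} f = S3 {..<n} f + S3 {..<m} (\<lambda>i j l. f (i + n) (j + n) (l + n))"
proof -
  have "S3 {..<n + m} f = S3 ({..<n + m} \<inter> {..<n}) f + S3 ({..<n + m} - {..<n}) f"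
    by (rule S3_split[OF finite_lessThan]) (use assms blk_nu[unfolded blk_def] in metis)
  then show ?thesis unfolding Uint Udiff S3_reindex .
qed

lemma N0_nu: "alg_norm_sq (n + m) nu = alg_norm_sq n mu + t^2 * alg_norm_sq m lam"
proof -
  have "alg_norm_sq (n + m) nu = S3 {..<n + m} (\<lambda>i j l. (cmod (nu i j l))^2)"
    unfolding alg_norm_sq_def S3_def by simp
  also have "\<dots> = S3 {..<n} (\<lambda>i j l. (cmod (nu i j l))^2) + S3 {..<m} (\<lambda>i j l. (cmod (nu (i + n) (j + n) (l + n)))^2)"
    by (rule S3_nu) simp
  also have "S3 {..<n} (\<lambda>i j l. (cmod (nu i j l))^2) = alg_norm_sq n mu"
    unfolding S3_def alg_norm_sq_def by (simp add: alg_dsum_def)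
  also have "S3 {..<m} (\<lambda>i j l. (cmod (nu (i + n) (j + n) (l + n)))^2) = t^2 * alg_norm_sq m lam"
    unfolding S3_def alg_norm_sq_def by (simp add: alg_dsum_def sum_distrib_left norm_mult power_mult_distrib)
  finally show ?thesis .
qed

lemma N1_nu: "N1 (n + m) nu b = N1 n mu (rA n b) + t * N1 m lam (rB n m b)"
proof -
  have "N1 (n + m) nu b = S3 {..<n + m} (\<lambda>i j l. 2 * Re (nu i j l * cnj (b i j l)))"
    unfolding N1_def S3_def by simp
  also have "\<dots> = S3 {..<n} (\<lambda>i j l. 2 * Re (nu i j l * cnj (b i j l)))
       + S3 {..<m} (\<lambda>i j l. 2 * Re (nu (i + n) (j + n) (l + n) * cnj (b (i + n) (j + n) (l + n))))"
    by (rule S3_nu) simp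
  also have "S3 {..<n} (\<lambda>i j l. 2 * Re (nu i j l * cnj (b i j l))) = N1 n mu (rA n b)"
    unfolding S3_def N1_def by (simp add: alg_dsum_def rA_def)
  also have "S3 {..<m} (\<lambda>i j l. 2 * Re (nu (i + n) (j + n) (l + n) * cnj (b (i + n) (j + n) (l + n))))
       = t * N1 m lam (rB n m b)"
    unfolding S3_def N1_def by (simp add: alg_dsum_def rB_def sum_distrib_left algebra_simps)
  finally show ?thesis .
qed

end

theorem mainTheorem4:
  fixes n m :: nat and mu lam :: alg
  assumes "critical n mu" and "critical m lam"
  shows "\<exists>t::complex. critical (n + m) (alg_dsum n mu t m lam)"
proof -
  have Vmu: "in_V n mu" and Nmu0: "alg_norm_sq n mu \<noteq> 0"
    and Vlam: "in_V m lam" and Nlam0: "alg_norm_sq m lam \<noteq> 0"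
    using assms unfolding critical_def by auto
  define Pm where "Pm = Re (C0 n mu)"
  define Pl where "Pl = Re (C0 m lam)"
  define Nm where "Nm = alg_norm_sq n mu"
  define Nl where "Nl = alg_norm_sq m lam"
  have Pm: "Pm > 0" unfolding Pm_def by (rule C0_pos[OF Nmu0])
  have Pl: "Pl > 0" unfolding Pl_def by (rule C0_pos[OF Nlam0])
  have Nm: "Nm > 0" unfolding Nm_def using Nmu0 norm_nonneg[of n mu] by linarith
  have Nl: "Nl > 0" unfolding Nl_def using Nlam0 norm_nonneg[of m lam] by linarith
  have cm: "\<And>b. in_V n b \<Longrightarrow> Re (C1 n mu b) * Nm = 2 * Pm * N1 n mu b"
    using assms(1) crit_iff[OF Vmu Nmu0] unfolding Pm_def Nm_def by blast
  have cl: "\<And>b. in_V m b \<Longrightarrow> Re (C1 m lam b) * Nl = 2 * Pl * N1 m lam b"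
    using assms(2) crit_iff[OF Vlam Nlam0] unfolding Pl_def Nl_def by blast
  define \<rho> where "\<rho> = Pm / Nm"
  define t where "t = sqrt (Pm * Nl / (Nm * Pl))"
  have t2: "t^2 = Pm * Nl / (Nm * Pl)" unfolding t_def using Pm Pl Nm Nl by simp
  have k: "t^2 * Pl = \<rho> * Nl" unfolding t2 \<rho>_def using Pl Nm by (simp add: field_simps)
  let ?nu = "alg_dsum n mu (complex_of_real t) m lam"
  have N0: "alg_norm_sq (n + m) ?nu = Nm + t^2 * Nl"
    unfolding Nm_def Nl_def by (rule N0_nu[OF Vmu Vlam])
  have N0ne: "alg_norm_sq (n + m) ?nu \<noteq> 0" unfolding N0 using Nm Nl
    by (metis add_pos_nonneg mult_nonneg_nonneg less_irrefl zero_le_power2 less_imp_le)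
  have P0: "Re (C0 (n + m) ?nu) = Pm + t^4 * Pl"
    unfolding C0_nu[OF Vmu Vlam] Pm_def Pl_def by (simp flip: of_real_power)
  show ?thesis
  proof (intro exI[of _ "complex_of_real t"] crit_iff[OF in_V_nu[OF Vmu Vlam] N0ne, THEN iffD2] allI impI)
    fix b assume "in_V (n + m) b"
    define X where "X = Re (C1 n mu (rA n b))"
    define Y where "Y = Re (C1 m lam (rB n m b))"
    define u where "u = N1 n mu (rA n b)"
    define v where "v = N1 m lam (rB n m b)"
    have hX: "X = 2 * \<rho> * u" using cm[OF in_V_rA] Nm unfolding X_def u_def \<rho>_def by (simp add: field_simps)
    have hY: "Y * Nl = 2 * Pl * v" using cl[OF in_V_rB] unfolding Y_def v_def .
    have C1: "Re (C1 (n + m) ?nu b) = X + t^3 * Y"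
      unfolding C1_nu[OF Vmu Vlam] X_def Y_def by (simp flip: of_real_power)
    have N1: "N1 (n + m) ?nu b = u + t * v" unfolding N1_nu[OF Vmu Vlam] u_def v_def ..
    have "t^3 * Y * Nl = t * (t^2 * Pl) * 2 * v" using hY by (simp add: power3_eq_cube power2_eq_square algebra_simps)
    also have "\<dots> = t * \<rho> * Nl * 2 * v" unfolding k by (simp add: algebra_simps)
    finally have tY: "t^3 * Y = 2 * t * \<rho> * v" using Nl by (simp add: algebra_simps)
    have P0': "Pm + t^4 * Pl = \<rho> * (Nm + t^2 * Nl)"
    proof -
      have "t^4 * Pl = t^2 * (t^2 * Pl)" by (simp add: power_numeral_reduce eval_nat_numeral)
      then show ?thesis unfolding k \<rho>_def using Nm by (simp add: field_simps)
    qed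
    show "Re (C1 (n + m) ?nu b) * alg_norm_sq (n + m) ?nu = 2 * Re (C0 (n + m) ?nu) * N1 (n + m) ?nu b"
      unfolding C1 N0 P0 N1 P0' using hX tY by (simp add: algebra_simps)
  qed
qed

end
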